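(* Consider a finite set of flows $\mathcal K$, each flow $k$ with rate $r_k>0$ associated to a beam $v_k\in V$; let $n_v=|\{k:v_k=v\}|$ and assume $n_v\ge1$ for all $v\in V$. The problem $$\text{maximize } \sum_{k\in\mathcal K}\ln(r_k\gamma_{v_k}\delta_k)\quad\text{subject to } \gamma\in\mathrm{conv}(\mathcal Z),\ \delta\in\Delta$$ has the unique optimal solution $\delta^\star_k=1/n_{v_k}$ and $\gamma^\star_v=\kappa^\star_v\prod_{v'\in\mathcal A(v)}(1-\kappa^\star_{v'})$ with $\kappa^\star_v=n_v/\sum_{v'\in\bar{\mathcal D}(v)}n_{v'}$, i.e. $$\gamma^\star_v=\frac{n_v}{\sum_{v'\in\bar{\mathcal D}(v)}n_{v'}}\prod_{v''\in\mathcal A(v)}\frac{\sum_{v'\in\mathcal D(v'')}n_{v'}}{\sum_{v'\in\bar{\mathcal D}(v'')}n_{v'}}.$$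
   Context: $G=(V,E)$ is a finite directed rooted tree with vertex set $V=\{1,\dots,|V|\}$ and root $1$, edges oriented from parent to child. For $v\in V$: $\mathcal A(v)$ is the set of strict ancestors of $v$, $\bar{\mathcal A}(v)=\mathcal A(v)\cup\{v\}$, $\mathcal D(v)$ is the set of strict descendants of $v$, $\bar{\mathcal D}(v)=\mathcal D(v)\cup\{v\}$, and $d(v)$ is the number of children of $v$. $\mathcal Z=\{z\in\{0,1\}^{V}: z_v z_{v'}=0 \text{ for all } v\in V,\ v'\in\mathcal A(v)\}$ and $\mathrm{conv}(\mathcal Z)$ is its convex hull. $\Delta=\{\delta\in[0,1]^{\mathcal K}: \sum_{k: v_k=v}\delta_k=1\ \forall v\in V\}$. *)

theory Defs
  imports "HOL-Analysis.Analysis"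
begin

(* Vertex set V = {1..N}; edges E oriented parent -> child; root 1. *)
definition vset :: "nat \<Rightarrow> nat set" where
  "vset N = {1..N}"

definition rooted_tree :: "nat \<Rightarrow> (nat \<times> nat) set \<Rightarrow> bool" where
  "rooted_tree N E \<longleftrightarrow> N \<ge> 1 \<and> E \<subseteq> vset N \<times> vset N
     \<and> (\<forall>v\<in>vset N. (1, v) \<in> E\<^sup>*)
     \<and> (\<forall>v\<in>vset N. v \<noteq> 1 \<longrightarrow> (\<exists>!u. (u, v) \<in> E))
     \<and> (\<forall>u. (u, 1) \<notin> E)"

definition anc :: "(nat \<times> nat) set \<Rightarrow> nat \<Rightarrow> nat set" where
  "anc E v = {u. (u, v) \<in> E\<^sup>+}"

definition desc :: "(nat \<times> nat) set \<Rightarrow> nat \<Rightarrow> nat set" where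
  "desc E v = {u. (v, u) \<in> E\<^sup>+}"

definition Zset :: "nat \<Rightarrow> (nat \<times> nat) set \<Rightarrow> (nat \<Rightarrow> real) set" where
  "Zset N E = {z. (\<forall>v\<in>vset N. z v = 0 \<or> z v = 1) \<and> (\<forall>v. v \<notin> vset N \<longrightarrow> z v = 0)
                 \<and> (\<forall>v\<in>vset N. \<forall>v'\<in>anc E v. z v * z v' = 0)}"

definition conv_fin :: "(nat \<Rightarrow> real) set \<Rightarrow> (nat \<Rightarrow> real) set" where
  "conv_fin S = {x. \<exists>c. (\<forall>z\<in>S. 0 \<le> c z) \<and> sum c S = 1 \<and> x = (\<lambda>v. \<Sum>z\<in>S. c z * z v)}"

definition Delta :: "nat \<Rightarrow> 'k set \<Rightarrow> ('k \<Rightarrow> nat) \<Rightarrow> ('k \<Rightarrow> real) set" where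
  "Delta N K beam = {\<delta>. (\<forall>k\<in>K. 0 \<le> \<delta> k \<and> \<delta> k \<le> 1) \<and> (\<forall>k. k \<notin> K \<longrightarrow> \<delta> k = 0)
                  \<and> (\<forall>v\<in>vset N. (\<Sum>k\<in>{k\<in>K. beam k = v}. \<delta> k) = 1)}"

definition nflows :: "'k set \<Rightarrow> ('k \<Rightarrow> nat) \<Rightarrow> nat \<Rightarrow> nat" where
  "nflows K beam v = card {k\<in>K. beam k = v}"

(* objective with the extended-value convention ln 0 = -infinity *)
definition objective :: "'k set \<Rightarrow> ('k \<Rightarrow> nat) \<Rightarrow> ('k \<Rightarrow> real) \<Rightarrow> (nat \<Rightarrow> real) \<Rightarrow> ('k \<Rightarrow> real) \<Rightarrow> ereal" where
  "objective K beam r \<gamma> \<delta> =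
     (if (\<forall>k\<in>K. r k * \<gamma> (beam k) * \<delta> k > 0)
      then ereal (\<Sum>k\<in>K. ln (r k * \<gamma> (beam k) * \<delta> k)) else -\<infinity>)"

definition kappa_star :: "(nat \<times> nat) set \<Rightarrow> 'k set \<Rightarrow> ('k \<Rightarrow> nat) \<Rightarrow> nat \<Rightarrow> real" where
  "kappa_star E K beam v = real (nflows K beam v) / (\<Sum>v'\<in>insert v (desc E v). real (nflows K beam v'))"

definition gamma_star :: "nat \<Rightarrow> (nat \<times> nat) set \<Rightarrow> 'k set \<Rightarrow> ('k \<Rightarrow> nat) \<Rightarrow> nat \<Rightarrow> real" where
  "gamma_star N E K beam v = (if v \<in> vset N
     then kappa_star E K beam v * (\<Prod>v'\<in>anc E v. 1 - kappa_star E K beam v') else 0)"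

definition delta_star :: "'k set \<Rightarrow> ('k \<Rightarrow> nat) \<Rightarrow> 'k \<Rightarrow> real" where
  "delta_star K beam k = (if k \<in> K then 1 / real (nflows K beam (beam k)) else 0)"

end

theory Submission
  imports Defs
begin


context
  fixes N :: nat and E :: "(nat \<times> nat) set"
  assumes tree: "rooted_tree N E"
begin

lemma E_sub: "(a,b) \<in> E \<Longrightarrow> a \<in> vset N \<and> b \<in> vset N"
  using tree unfolding rooted_tree_def by blast

lemma trancl_sub: "(a,b) \<in> E\<^sup>+ \<Longrightarrow> a \<in> vset N \<and> b \<in> vset N"
  by (induction rule: trancl_induct) (auto dest: E_sub)

lemma no_root_parent: "(a,1) \<notin> E"
  using tree unfolding rooted_tree_def by blast

lemma parent_unique: "(a,v) \<in> E \<Longrightarrow> (b,v) \<in> E \<Longrightarrow> a = b"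
proof -
  assume a: "(a,v) \<in> E" and b: "(b,v) \<in> E"
  have "v \<in> vset N" "v \<noteq> 1" using E_sub[OF a] no_root_parent a by auto
  then have "\<exists>!u. (u, v) \<in> E" using tree unfolding rooted_tree_def by blast
  then show ?thesis using a b by blast
qed

lemma reach: "v \<in> vset N \<Longrightarrow> (1, v) \<in> E\<^sup>*"
  using tree unfolding rooted_tree_def by blast

lemma acyclic_aux: "(1, v) \<in> E\<^sup>* \<Longrightarrow> (v,v) \<notin> E\<^sup>+"
proof (induction rule: rtrancl_induct)
  case base
  show ?case
  proof
    assume "(1,1) \<in> E\<^sup>+"
    then obtain w where "(w,1) \<in> E" by (meson tranclE)
    then show False using no_root_parent by blast
  qed
next
  case (step u v)
  show ?case
  proof
    assume "(v,v) \<in> E\<^sup>+"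
    then obtain w where w: "(v,w) \<in> E\<^sup>*" "(w,v) \<in> E" by (meson tranclD2)
    then have "w = u" using parent_unique step(2) by blast
    then have "(u,u) \<in> E\<^sup>+" using w step(2) by (meson rtrancl_into_trancl2)
    then show False using step(3) by blast
  qed
qed

lemma acyclic: "(v,v) \<notin> E\<^sup>+"
  using acyclic_aux reach trancl_sub by blast

lemma comparable: "(b,w) \<in> E\<^sup>* \<Longrightarrow> (a,w) \<in> E\<^sup>* \<Longrightarrow> (a,b) \<in> E\<^sup>* \<or> (b,a) \<in> E\<^sup>*"
proof (induction rule: rtrancl_induct)
  case base
  then show ?case by blast
next
  case (step x w)
  show ?case
  proof (cases "a = w")
    case True
    then show ?thesis using step by (meson rtrancl.rtrancl_into_rtrancl)
  next
    case False
    then have "(a,w) \<in> E\<^sup>+" using step(4) by (meson rtranclD)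
    then obtain y where y: "(a,y) \<in> E\<^sup>*" "(y,w) \<in> E" by (meson tranclD2)
    then have "y = x" using parent_unique step(2) by blast
    then show ?thesis using step y by blast
  qed
qed

lemma children_disjoint:
  assumes "(u,c) \<in> E" "(u,c') \<in> E" "c \<noteq> c'" "(c,w) \<in> E\<^sup>*" "(c',w) \<in> E\<^sup>*"
  shows False
proof -
  have "(c,c') \<in> E\<^sup>* \<or> (c',c) \<in> E\<^sup>*" using comparable assms(4,5) by blast
  moreover have "\<not> (c,c') \<in> E\<^sup>*" if "(u,c) \<in> E" "(u,c') \<in> E" "c \<noteq> c'" for c c'
  proof
    assume "(c,c') \<in> E\<^sup>*"
    then have "(c,c') \<in> E\<^sup>+" using that by (meson rtranclD)
    then obtain y where y: "(c,y) \<in> E\<^sup>*" "(y,c') \<in> E" by (meson tranclD2)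
    then have "y = u" using parent_unique that by blast
    then have "(u,u) \<in> E\<^sup>+" using y that by (meson rtrancl_into_trancl2)
    then show False using acyclic by blast
  qed
  ultimately show False using assms by blast
qed

lemma desc_children: "desc E u = (\<Union>c\<in>{c. (u,c) \<in> E}. insert c (desc E c))"
  unfolding desc_def
  apply (auto intro: rtrancl_into_trancl2)
  by (metis rtranclD tranclD)

lemma anc_child: "(u,c) \<in> E \<Longrightarrow> anc E c = insert u (anc E u)"
  unfolding anc_def
  apply (auto dest: tranclD2 intro: trancl_into_trancl)
  by (metis parent_unique rtranclD tranclD2 trancl_into_trancl)

lemma not_anc_self: "u \<notin> anc E u"
  unfolding anc_def using acyclic by blast

lemma not_desc_self: "u \<notin> desc E u"
  unfolding desc_def using acyclic by blast

lemma anc_sub: "anc E v \<subseteq> vset N"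
  unfolding anc_def using trancl_sub by blast

lemma desc_sub: "desc E v \<subseteq> vset N"
  unfolding desc_def using trancl_sub by blast

lemma finV: "finite (vset N)" unfolding vset_def by simp

lemma fin_anc: "finite (anc E v)" using anc_sub finV finite_subset by blast
lemma fin_desc: "finite (desc E v)" using desc_sub finV finite_subset by blast

lemma desc_child_psub: "(u,c) \<in> E \<Longrightarrow> desc E c \<subset> desc E u"
  unfolding desc_def using not_desc_self[of c] unfolding desc_def
  by (auto intro: trancl_into_trancl2)

lemma V_root: "vset N = insert 1 (desc E 1)"
proof -
  have "v \<in> desc E 1" if "v \<in> vset N" "v \<noteq> 1" for v
    using reach[OF that(1)] that(2) unfolding desc_def by (auto dest: rtranclD)
  moreover have "(1::nat) \<in> vset N" using tree unfolding rooted_tree_def vset_def by auto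
  ultimately show ?thesis using desc_sub by blast
qed

lemma anc_root: "anc E 1 = {}"
  unfolding anc_def using no_root_parent by (auto dest: tranclD2)

lemma children_sub: "{c. (u,c) \<in> E} \<subseteq> vset N" using E_sub by blast

end


definition Ssum :: "(nat \<times> nat) set \<Rightarrow> (nat \<Rightarrow> real) \<Rightarrow> nat \<Rightarrow> real" where
  "Ssum E w v = (\<Sum>v'\<in>insert v (desc E v). w v')"
definition kap :: "(nat \<times> nat) set \<Rightarrow> (nat \<Rightarrow> real) \<Rightarrow> nat \<Rightarrow> real" where
  "kap E w v = w v / Ssum E w v"
definition pii :: "(nat \<times> nat) set \<Rightarrow> (nat \<Rightarrow> real) \<Rightarrow> nat \<Rightarrow> real" where
  "pii E w v = (\<Prod>a\<in>anc E v. 1 - kap E w a)"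

context
  fixes N :: nat and E :: "(nat \<times> nat) set" and w :: "nat \<Rightarrow> real"
  assumes tree: "rooted_tree N E" and wpos: "\<forall>v\<in>vset N. w v > 0"
begin

lemma S_split: "Ssum E w v = w v + (\<Sum>v'\<in>desc E v. w v')"
  unfolding Ssum_def using fin_desc[OF tree] not_desc_self[OF tree] by simp

lemma desc_sum_pos: "(\<Sum>v'\<in>desc E v. w v') \<ge> 0"
proof (rule sum_nonneg)
  fix x assume "x \<in> desc E v"
  then have "x \<in> vset N" using desc_sub[OF tree] by blast
  then show "0 \<le> w x" using wpos by fastforce
qed

lemma S_pos: "v \<in> vset N \<Longrightarrow> Ssum E w v > 0"
proof -
  assume v: "v \<in> vset N"
  then have "w v > 0" using wpos by blast
  then show ?thesis using S_split[of v] desc_sum_pos[of v] by linarith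
qed

lemma kap_pos: "v \<in> vset N \<Longrightarrow> kap E w v > 0"
  unfolding kap_def using S_pos wpos by simp

lemma kap_le1: "v \<in> vset N \<Longrightarrow> kap E w v \<le> 1"
  unfolding kap_def using S_pos S_split desc_sum_pos by simp

lemma one_minus_kap: "v \<in> vset N \<Longrightarrow> 1 - kap E w v = (\<Sum>v'\<in>desc E v. w v') / Ssum E w v"
  unfolding kap_def using S_pos[of v] S_split[of v] by (simp add: field_simps)

lemma desc_sum_pos_strict: "x \<in> desc E v \<Longrightarrow> (\<Sum>v'\<in>desc E v. w v') > 0"
proof -
  assume x: "x \<in> desc E v"
  have "w x > 0" using x desc_sub[OF tree] wpos by blast
  moreover have "w x \<le> (\<Sum>v'\<in>desc E v. w v')"
  proof (rule member_le_sum[OF x _ fin_desc[OF tree]])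
    fix y assume "y \<in> desc E v - {x}"
    then have "y \<in> vset N" using desc_sub[OF tree] by blast
    then show "0 \<le> w y" using wpos by fastforce
  qed
  ultimately show ?thesis by simp
qed

lemma kap_lt1: "a \<in> anc E v \<Longrightarrow> kap E w a < 1"
proof -
  assume a: "a \<in> anc E v"
  then have "v \<in> desc E a" unfolding anc_def desc_def by simp
  moreover have "a \<in> vset N" using a anc_sub[OF tree] by blast
  ultimately have "(\<Sum>v'\<in>desc E a. w v') / Ssum E w a > 0"
    using desc_sum_pos_strict[of v a] S_pos[of a] by simp
  then show ?thesis using one_minus_kap[OF \<open>a \<in> vset N\<close>] by linarith
qed

lemma pii_pos: "pii E w v > 0"
  unfolding pii_def using kap_lt1 by (intro prod_pos) (auto)

lemma pii_child: "(u,c) \<in> E \<Longrightarrow> pii E w c = (1 - kap E w u) * pii E w u"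
  unfolding pii_def using anc_child[OF tree] not_anc_self[OF tree] fin_anc[OF tree] by simp

lemma children_sum: "(\<Sum>v'\<in>desc E u. f v') = (\<Sum>c\<in>{c. (u,c) \<in> E}. \<Sum>v'\<in>insert c (desc E c). f v')"
proof -
  have fc: "finite {c. (u,c) \<in> E}" using finite_subset[OF children_sub[OF tree] finV[OF tree]] by blast
  have fd: "\<forall>i\<in>{c. (u,c) \<in> E}. finite (insert i (desc E i))"
    using fin_desc[OF tree] by blast
  have dj: "\<forall>i\<in>{c. (u,c) \<in> E}. \<forall>j\<in>{c. (u,c) \<in> E}. i \<noteq> j \<longrightarrow> insert i (desc E i) \<inter> insert j (desc E j) = {}"
  proof (intro ballI impI)
    fix i j assume ij: "i \<in> {c. (u,c) \<in> E}" "j \<in> {c. (u,c) \<in> E}" "i \<noteq> j"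
    show "insert i (desc E i) \<inter> insert j (desc E j) = {}"
    proof (rule ccontr)
      assume "insert i (desc E i) \<inter> insert j (desc E j) \<noteq> {}"
      then obtain x where x: "x \<in> insert i (desc E i)" "x \<in> insert j (desc E j)" by blast
      have "(i,x) \<in> E\<^sup>*" using x(1) unfolding desc_def by (auto dest: trancl_into_rtrancl)
      moreover have "(j,x) \<in> E\<^sup>*" using x(2) unfolding desc_def by (auto dest: trancl_into_rtrancl)
      ultimately show False using children_disjoint[OF tree, of u i j x] ij by blast
    qed
  qed
  have "(\<Sum>v'\<in>desc E u. f v') = (\<Sum>v'\<in>(\<Union>c\<in>{c. (u,c) \<in> E}. insert c (desc E c)). f v')"
    by (rule arg_cong[where f="\<lambda>A. sum f A"], rule desc_children[OF tree])
  also have "\<dots> = (\<Sum>c\<in>{c. (u,c) \<in> E}. \<Sum>v'\<in>insert c (desc E c). f v')"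
    by (rule sum.UNION_disjoint[OF fc fd dj])
  finally show ?thesis .
qed

lemma antichain_bound:
  assumes z: "z \<in> Zset N E"
  shows "u \<in> vset N \<Longrightarrow> (\<Sum>v\<in>insert u (desc E u). z v * Ssum E w v / pii E w v) \<le> Ssum E w u / pii E w u"
proof (induction u rule: measure_induct_rule[of "\<lambda>u. card (desc E u)"])
  case (less u)
  have z01: "\<And>v. z v = 0 \<or> z v = 1" using z unfolding Zset_def by blast
  have zac: "\<And>v v'. v \<in> vset N \<Longrightarrow> v' \<in> anc E v \<Longrightarrow> z v * z v' = 0"
    using z unfolding Zset_def by blast
  have split: "(\<Sum>v\<in>insert u (desc E u). z v * Ssum E w v / pii E w v)
     = z u * Ssum E w u / pii E w u + (\<Sum>v\<in>desc E u. z v * Ssum E w v / pii E w v)"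
    using fin_desc[OF tree] not_desc_self[OF tree] by simp
  show ?case
  proof (cases "z u = 1")
    case True
    have "z v = 0" if "v \<in> desc E u" for v
    proof -
      have "u \<in> anc E v" using that unfolding anc_def desc_def by simp
      moreover have "v \<in> vset N" using that desc_sub[OF tree] by blast
      ultimately show ?thesis using zac True by fastforce
    qed
    then show ?thesis using split True by simp
  next
    case False
    then have zu: "z u = 0" using z01 by blast
    let ?Ch = "{c. (u,c) \<in> E}"
    have fc: "finite ?Ch" using finite_subset[OF children_sub[OF tree] finV[OF tree]] by blast
    have IH: "(\<Sum>v\<in>insert c (desc E c). z v * Ssum E w v / pii E w v) \<le> Ssum E w c / pii E w c"
      if "c \<in> ?Ch" for c
    proof (rule less.IH)
      show "card (desc E c) < card (desc E u)"
        using desc_child_psub[OF tree] that fin_desc[OF tree] by (simp add: psubset_card_mono)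
      show "c \<in> vset N" using that E_sub[OF tree] by blast
    qed
    have "(\<Sum>v\<in>insert u (desc E u). z v * Ssum E w v / pii E w v)
        = (\<Sum>c\<in>?Ch. \<Sum>v\<in>insert c (desc E c). z v * Ssum E w v / pii E w v)"
      unfolding split zu by (simp only: children_sum[of _ u])
    also have "\<dots> \<le> (\<Sum>c\<in>?Ch. Ssum E w c / pii E w c)"
      using IH by (rule sum_mono)
    also have "\<dots> \<le> Ssum E w u / pii E w u"
    proof (cases "?Ch = {}")
      case True
      then show ?thesis using S_pos[OF less.prems] pii_pos[of u] by simp
    next
      case False
      then obtain c0 where c0: "(u,c0) \<in> E" by blast
      have D: "(\<Sum>v'\<in>desc E u. w v') = (\<Sum>c\<in>?Ch. Ssum E w c)"
        unfolding Ssum_def by (rule children_sum)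
      have Dp: "(\<Sum>v'\<in>desc E u. w v') > 0"
        using c0 by (intro desc_sum_pos_strict[of c0]) (simp add: desc_def)
      have "(\<Sum>c\<in>?Ch. Ssum E w c / pii E w c) = (\<Sum>c\<in>?Ch. Ssum E w c / ((1 - kap E w u) * pii E w u))"
        using pii_child by simp
      also have "\<dots> = (\<Sum>c\<in>?Ch. Ssum E w c) / ((1 - kap E w u) * pii E w u)"
        by (simp add: sum_divide_distrib)
      also have "\<dots> = (\<Sum>c\<in>?Ch. Ssum E w c) / (((\<Sum>c\<in>?Ch. Ssum E w c) / Ssum E w u) * pii E w u)"
        using D one_minus_kap[OF less.prems] by simp
      also have "\<dots> = Ssum E w u / pii E w u"
        using D Dp S_pos[OF less.prems] pii_pos[of u] by (simp add: field_simps)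
      finally show ?thesis by simp
    qed
    finally show ?thesis .
  qed
qed

end


definition gC :: "(nat \<times> nat) set \<Rightarrow> nat set \<Rightarrow> nat \<Rightarrow> real" where
  "gC E C = (\<lambda>v. if v \<in> C \<and> anc E v \<inter> C = {} then 1 else 0)"

definition pC :: "nat \<Rightarrow> (nat \<times> nat) set \<Rightarrow> (nat \<Rightarrow> real) \<Rightarrow> nat set \<Rightarrow> real" where
  "pC N E w C = (\<Prod>u\<in>C. kap E w u) * (\<Prod>u\<in>vset N - C. 1 - kap E w u)"

context
  fixes N :: nat and E :: "(nat \<times> nat) set" and w :: "nat \<Rightarrow> real"
  assumes tree: "rooted_tree N E" and wpos: "\<forall>v\<in>vset N. w v > 0"
begin

lemma gC_Z: "C \<subseteq> vset N \<Longrightarrow> gC E C \<in> Zset N E"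
  unfolding Zset_def gC_def by auto

lemma Z_finite: "finite (Zset N E)"
proof -
  have "Zset N E \<subseteq> (\<lambda>C v. if v \<in> C then (1::real) else 0) ` Pow (vset N)"
  proof
    fix z assume z: "z \<in> Zset N E"
    let ?C = "{v \<in> vset N. z v = 1}"
    have "z = (\<lambda>v. if v \<in> ?C then 1 else 0)"
    proof
      fix v show "z v = (if v \<in> ?C then 1 else 0)"
        using z unfolding Zset_def by (cases "v \<in> vset N") auto
    qed
    then show "z \<in> (\<lambda>C v. if v \<in> C then (1::real) else 0) ` Pow (vset N)" by blast
  qed
  then show ?thesis using finV[OF tree] finite_subset by blast
qed

lemma pC_nonneg: "C \<subseteq> vset N \<Longrightarrow> pC N E w C \<ge> 0"
proof -
  assume C: "C \<subseteq> vset N"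
  have "(\<Prod>u\<in>C. kap E w u) \<ge> 0"
    by (rule prod_nonneg) (use C kap_pos[OF tree wpos] in \<open>fastforce\<close>)
  moreover have "(\<Prod>u\<in>vset N - C. 1 - kap E w u) \<ge> 0"
    by (rule prod_nonneg) (use kap_le1[OF tree wpos] in \<open>fastforce\<close>)
  ultimately show ?thesis unfolding pC_def by simp
qed

lemma pC_sum: "(\<Sum>C\<in>Pow (vset N). pC N E w C) = 1"
proof -
  have "(\<Prod>u\<in>vset N. kap E w u + (1 - kap E w u)) = (\<Sum>C\<in>Pow (vset N). pC N E w C)"
    unfolding pC_def by (rule prod_add[OF finV[OF tree]])
  then show ?thesis by simp
qed

lemma pC_marg:
  assumes v: "v \<in> vset N"
  shows "(\<Sum>C\<in>Pow (vset N). pC N E w C * gC E C v) = kap E w v * pii E w v"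
proof -
  define f1 where "f1 u = (if u \<in> anc E v then 0 else kap E w u)" for u
  define f2 where "f2 u = (if u = v then 0 else 1 - kap E w u)" for u
  define F where "F u = (if u = v then kap E w v else if u \<in> anc E v then 1 - kap E w u else 1)" for u
  have fV: "finite (vset N)" by (rule finV[OF tree])
  have "(\<Prod>u\<in>vset N. f1 u + f2 u) = (\<Sum>X\<in>Pow (vset N). (\<Prod>u\<in>X. f1 u) * (\<Prod>u\<in>vset N - X. f2 u))"
    by (rule prod_add[OF fV])
  also have "\<dots> = (\<Sum>C\<in>Pow (vset N). pC N E w C * gC E C v)"
  proof (rule sum.cong[OF refl])
    fix X assume X: "X \<in> Pow (vset N)"
    have fX: "finite X" using X fV finite_subset by blast
    show "(\<Prod>u\<in>X. f1 u) * (\<Prod>u\<in>vset N - X. f2 u) = pC N E w X * gC E X v"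
    proof (cases "anc E v \<inter> X = {}")
      case False
      then obtain u where u: "u \<in> X" "u \<in> anc E v" by blast
      have "(\<Prod>u\<in>X. f1 u) = 0" using u fX by (intro prod_zero) (auto simp: f1_def)
      then show ?thesis using False unfolding gC_def by simp
    next
      case True
      show ?thesis
      proof (cases "v \<in> X")
        case False
        have "(\<Prod>u\<in>vset N - X. f2 u) = 0" using False v fV by (intro prod_zero) (auto simp: f2_def)
        then show ?thesis using False unfolding gC_def by simp
      next
        case vX: True
        have "(\<Prod>u\<in>X. f1 u) = (\<Prod>u\<in>X. kap E w u)"
          using True by (intro prod.cong) (auto simp: f1_def)
        moreover have "(\<Prod>u\<in>vset N - X. f2 u) = (\<Prod>u\<in>vset N - X. 1 - kap E w u)"
          using vX by (intro prod.cong) (auto simp: f2_def)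
        ultimately show ?thesis using True vX unfolding gC_def pC_def by simp
      qed
    qed
  qed
  finally have 1: "(\<Prod>u\<in>vset N. f1 u + f2 u) = (\<Sum>C\<in>Pow (vset N). pC N E w C * gC E C v)" .
  have "(\<Prod>u\<in>vset N. f1 u + f2 u) = (\<Prod>u\<in>vset N. F u)"
    using not_anc_self[OF tree, of v] by (intro prod.cong) (auto simp: f1_def f2_def F_def)
  also have "\<dots> = (\<Prod>u\<in>insert v (anc E v). F u)"
  proof (rule prod.mono_neutral_right[OF fV])
    show "insert v (anc E v) \<subseteq> vset N" using v anc_sub[OF tree] by blast
    show "\<forall>i\<in>vset N - insert v (anc E v). F i = 1" by (auto simp: F_def)
  qed
  also have "\<dots> = F v * (\<Prod>u\<in>anc E v. F u)"
    using fin_anc[OF tree] not_anc_self[OF tree, of v] by simp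
  also have "\<dots> = kap E w v * pii E w v"
    unfolding pii_def using not_anc_self[OF tree, of v]
    by (auto simp: F_def intro!: prod.cong)
  finally show ?thesis using 1 by simp
qed

lemma gs_conv:
  "(\<lambda>v. if v \<in> vset N then kap E w v * pii E w v else 0) \<in> conv_fin (Zset N E)"
proof -
  let ?V = "vset N"
  define c where "c z = (\<Sum>C\<in>{C. C \<in> Pow ?V \<and> gC E C = z}. pC N E w C)" for z
  have fP: "finite (Pow ?V)" using finV[OF tree] by simp
  have img: "gC E ` Pow ?V \<subseteq> Zset N E" using gC_Z by blast
  have c0: "\<forall>z\<in>Zset N E. 0 \<le> c z"
    unfolding c_def by (auto intro!: sum_nonneg pC_nonneg)
  have c1: "sum c (Zset N E) = 1"
    unfolding c_def using sum.group[OF fP Z_finite img, of "pC N E w"] pC_sum by simp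
  have c2: "(\<lambda>v. if v \<in> ?V then kap E w v * pii E w v else 0) = (\<lambda>v. \<Sum>z\<in>Zset N E. c z * z v)"
  proof
    fix v
    have "(\<Sum>z\<in>Zset N E. c z * z v) = (\<Sum>z\<in>Zset N E. \<Sum>C\<in>{C. C \<in> Pow ?V \<and> gC E C = z}. pC N E w C * gC E C v)"
      unfolding c_def sum_distrib_right by (intro sum.cong) auto
    also have "\<dots> = (\<Sum>C\<in>Pow ?V. pC N E w C * gC E C v)"
      by (rule sum.group[OF fP Z_finite img])
    finally have e: "(\<Sum>z\<in>Zset N E. c z * z v) = (\<Sum>C\<in>Pow ?V. pC N E w C * gC E C v)" .
    show "(if v \<in> ?V then kap E w v * pii E w v else 0) = (\<Sum>z\<in>Zset N E. c z * z v)"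
    proof (cases "v \<in> ?V")
      case True
      then show ?thesis using e pC_marg by simp
    next
      case False
      have "(\<Sum>C\<in>Pow ?V. pC N E w C * gC E C v) = 0"
        using False by (intro sum.neutral) (auto simp: gC_def)
      then show ?thesis using e False by simp
    qed
  qed
  show ?thesis unfolding conv_fin_def using c0 c1 c2 by blast
qed

end


lemma ln_lt_minus_one: "0 < (x::real) \<Longrightarrow> x \<noteq> 1 \<Longrightarrow> ln x < x - 1"
  using ln_le_minus_one ln_eq_minus_one by fastforce

lemma group_beam:
  fixes f :: "'k \<Rightarrow> real"
  assumes finK: "finite K" and bV: "\<forall>k\<in>K. beam k \<in> V" and fV: "finite V"
  shows "(\<Sum>k\<in>K. f k) = (\<Sum>v\<in>V. \<Sum>k\<in>{k\<in>K. beam k = v}. f k)"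
proof -
  have "beam ` K \<subseteq> V" using bV by blast
  from sum.group[OF finK fV this, of f] show ?thesis by simp
qed

lemma conv_outside:
  assumes "\<gamma> \<in> conv_fin (Zset N E)" "v \<notin> vset N"
  shows "\<gamma> v = 0"
  using assms unfolding conv_fin_def Zset_def by auto

lemma conv_nonneg:
  assumes "\<gamma> \<in> conv_fin (Zset N E)"
  shows "\<gamma> v \<ge> 0"
proof -
  obtain c where c: "\<forall>z\<in>Zset N E. 0 \<le> c z" "\<gamma> = (\<lambda>v. \<Sum>z\<in>Zset N E. c z * z v)"
    using assms unfolding conv_fin_def by blast
  have "\<forall>z\<in>Zset N E. z v \<ge> 0"
  proof
    fix z assume z: "z \<in> Zset N E"
    show "z v \<ge> 0"
    proof (cases "v \<in> vset N")
      case True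
      then have "z v = 0 \<or> z v = 1" using z unfolding Zset_def by blast
      then show ?thesis by auto
    next
      case False
      then show ?thesis using z unfolding Zset_def by simp
    qed
  qed
  then show ?thesis using c by (auto intro!: sum_nonneg)
qed

theorem mainTheorem3:
  fixes N :: nat and E :: "(nat \<times> nat) set"
    and K :: "'k set" and beam :: "'k \<Rightarrow> nat" and r :: "'k \<Rightarrow> real"
  assumes tree: "rooted_tree N E"
    and finK: "finite K"
    and rpos: "\<forall>k\<in>K. r k > 0"
    and beamV: "\<forall>k\<in>K. beam k \<in> vset N"
    and nonempty: "\<forall>v\<in>vset N. nflows K beam v \<ge> 1"
  shows "gamma_star N E K beam \<in> conv_fin (Zset N E)
       \<and> delta_star K beam \<in> Delta N K beam
       \<and> (\<forall>\<gamma> \<delta>. \<gamma> \<in> conv_fin (Zset N E) \<and> \<delta> \<in> Delta N K beam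
            \<and> (\<gamma>, \<delta>) \<noteq> (gamma_star N E K beam, delta_star K beam)
            \<longrightarrow> objective K beam r \<gamma> \<delta> < objective K beam r (gamma_star N E K beam) (delta_star K beam))"
proof -
  define w where "w v = real (nflows K beam v)" for v
  let ?V = "vset N"
  have wpos: "\<forall>v\<in>?V. w v > 0" using nonempty unfolding w_def by fastforce
  have fV: "finite ?V" by (rule finV[OF tree])
  have kk: "kappa_star E K beam = kap E w"
    unfolding kappa_star_def kap_def Ssum_def w_def by (rule ext) simp
  define gs where "gs = gamma_star N E K beam"
  have gs_eq: "gs = (\<lambda>v. if v \<in> ?V then kap E w v * pii E w v else 0)"
    unfolding gs_def gamma_star_def kk pii_def by (rule ext) simp
  have gs_pos: "gs v > 0" if "v \<in> ?V" for v
    using that kap_pos[OF tree wpos] pii_pos[OF tree wpos] unfolding gs_eq by simp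
  have part1: "gamma_star N E K beam \<in> conv_fin (Zset N E)"
    using gs_conv[OF tree wpos] gs_eq unfolding gs_def by simp
  define ds where "ds = delta_star K beam"
  have nb: "w (beam k) \<ge> 1" if "k \<in> K" for k
    using nonempty beamV that unfolding w_def by fastforce
  have ds_k: "ds k = 1 / w (beam k)" if "k \<in> K" for k
    using that unfolding ds_def delta_star_def w_def by simp
  have card_eq: "real (card {k\<in>K. beam k = v}) = w v" for v
    unfolding w_def nflows_def by simp
  have part2: "delta_star K beam \<in> Delta N K beam"
  proof -
    have "(\<Sum>k\<in>{k\<in>K. beam k = v}. ds k) = 1" if v: "v \<in> ?V" for v
    proof -
      have "(\<Sum>k\<in>{k\<in>K. beam k = v}. ds k) = (\<Sum>k\<in>{k\<in>K. beam k = v}. 1 / w v)"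
        using ds_k by (intro sum.cong) auto
      also have "\<dots> = w v * (1 / w v)" using card_eq[of v] by simp
      also have "\<dots> = 1" using wpos v by (simp add: less_imp_neq[symmetric])
      finally show ?thesis .
    qed
    moreover have "\<forall>k\<in>K. 0 \<le> ds k \<and> ds k \<le> 1"
    proof
      fix k assume k: "k \<in> K"
      have "w (beam k) \<ge> 1" using nb k by blast
      then show "0 \<le> ds k \<and> ds k \<le> 1" using ds_k[OF k] by simp
    qed
    moreover have "\<forall>k. k \<notin> K \<longrightarrow> ds k = 0" unfolding ds_def delta_star_def by simp
    ultimately show ?thesis unfolding Delta_def ds_def by blast
  qed
  have part3: "objective K beam r \<gamma> \<delta> < objective K beam r gs ds"
    if g: "\<gamma> \<in> conv_fin (Zset N E)" and d: "\<delta> \<in> Delta N K beam" and ne: "(\<gamma>, \<delta>) \<noteq> (gs, ds)"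
    for \<gamma> \<delta>
  proof -
    have dsp: "ds k > 0" if "k \<in> K" for k
    proof -
      have "w (beam k) \<ge> 1" using nb that by blast
      then show ?thesis using ds_k[OF that] by simp
    qed
    have starpos: "\<forall>k\<in>K. r k * gs (beam k) * ds k > 0"
      using rpos gs_pos beamV dsp by simp
    then have objs: "objective K beam r gs ds = ereal (\<Sum>k\<in>K. ln (r k * gs (beam k) * ds k))"
      unfolding objective_def by simp
    show ?thesis
    proof (cases "\<forall>k\<in>K. r k * \<gamma> (beam k) * \<delta> k > 0")
      case False
      then have "objective K beam r \<gamma> \<delta> = -\<infinity>" unfolding objective_def by (simp only: if_False)
      then show ?thesis unfolding objs by simp
    next
      case True
      have dnn: "\<delta> k \<ge> 0" if "k \<in> K" for k using d that unfolding Delta_def by blast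
      have gpos: "\<gamma> (beam k) > 0" and dpos: "\<delta> k > 0" if "k \<in> K" for k
      proof -
        have "\<gamma> (beam k) * \<delta> k > 0" using True rpos that
          by (metis mult.assoc zero_less_mult_pos)
        then show "\<gamma> (beam k) > 0" "\<delta> k > 0"
          using conv_nonneg[OF g, of "beam k"] dnn[OF that] by (auto simp: zero_less_mult_iff)
      qed
      have obj: "objective K beam r \<gamma> \<delta> = ereal (\<Sum>k\<in>K. ln (r k * \<gamma> (beam k) * \<delta> k))"
        using True unfolding objective_def by simp
      define x where "x k = \<gamma> (beam k) / gs (beam k)" for k
      define y where "y k = \<delta> k / ds k" for k
      have xpos: "x k > 0" and ypos: "y k > 0" if "k \<in> K" for k
        using gpos dpos gs_pos beamV dsp that unfolding x_def y_def by auto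
      have decomp: "ln (r k * \<gamma> (beam k) * \<delta> k) = ln (r k * gs (beam k) * ds k) + ln (x k) + ln (y k)"
        if k: "k \<in> K" for k
      proof -
        have p1: "gs (beam k) > 0" using gs_pos beamV k by blast
        have p2: "ds k > 0" using dsp k by blast
        have e: "r k * \<gamma> (beam k) * \<delta> k = (r k * gs (beam k) * ds k) * x k * y k"
          using p1 p2 unfolding x_def y_def by (simp add: field_simps)
        have a: "r k * gs (beam k) * ds k > 0" using starpos k by blast
        have xy: "x k > 0" "y k > 0" using xpos ypos k by auto
        have "ln ((r k * gs (beam k) * ds k) * x k * y k) = ln ((r k * gs (beam k) * ds k) * x k) + ln (y k)"
          using a xy by (intro ln_mult_pos) auto
        also have "ln ((r k * gs (beam k) * ds k) * x k) = ln (r k * gs (beam k) * ds k) + ln (x k)"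
          using a xy by (intro ln_mult_pos) auto
        finally show ?thesis unfolding e .
      qed
      have le: "ln (r k * \<gamma> (beam k) * \<delta> k) \<le> ln (r k * gs (beam k) * ds k) + (x k - 1) + (y k - 1)"
        if k: "k \<in> K" for k
        using decomp[OF k] ln_le_minus_one[OF xpos[OF k]] ln_le_minus_one[OF ypos[OF k]] by linarith
      have ex: "\<exists>k\<in>K. ln (r k * \<gamma> (beam k) * \<delta> k) < ln (r k * gs (beam k) * ds k) + (x k - 1) + (y k - 1)"
      proof (cases "\<gamma> = gs")
        case False
        then obtain v where v: "\<gamma> v \<noteq> gs v" by blast
        have vV: "v \<in> ?V"
        proof (rule ccontr)
          assume "v \<notin> ?V"
          then show False using v conv_outside[OF g] gs_eq by simp
        qed
        then have "card {k\<in>K. beam k = v} \<ge> 1" using nonempty unfolding nflows_def by blast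
        then have "{k\<in>K. beam k = v} \<noteq> {}" by (metis card.empty not_one_le_zero)
        then obtain k where k: "k \<in> K" "beam k = v" by blast
        have "x k \<noteq> 1" using v k gs_pos[OF vV] unfolding x_def by simp
        then have "ln (x k) < x k - 1" using ln_lt_minus_one xpos k by blast
        then show ?thesis using decomp[OF k(1)] ln_le_minus_one[OF ypos[OF k(1)]] k by (intro bexI[of _ k]) linarith+
      next
        case True
        then have "\<delta> \<noteq> ds" using ne by simp
        then obtain k where kd: "\<delta> k \<noteq> ds k" by blast
        have k: "k \<in> K"
        proof (rule ccontr)
          assume "k \<notin> K"
          then show False using kd d unfolding Delta_def ds_def delta_star_def by simp
        qed
        have "y k \<noteq> 1" using kd dsp[OF k] unfolding y_def by simp
        then have "ln (y k) < y k - 1" using ln_lt_minus_one ypos k by blast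
        then show ?thesis using decomp[OF k] ln_le_minus_one[OF xpos[OF k]] k by (intro bexI[of _ k]) linarith+
      qed
      have strict: "(\<Sum>k\<in>K. ln (r k * \<gamma> (beam k) * \<delta> k)) < (\<Sum>k\<in>K. ln (r k * gs (beam k) * ds k) + (x k - 1) + (y k - 1))"
        by (rule sum_strict_mono_ex1[OF finK]) (use le ex in auto)
      have sumx: "(\<Sum>k\<in>K. x k - 1) \<le> 0"
      proof -
        have "(\<Sum>k\<in>K. x k - 1) = (\<Sum>v\<in>?V. \<Sum>k\<in>{k\<in>K. beam k = v}. x k - 1)"
          by (rule group_beam[OF finK beamV fV])
        also have "\<dots> = (\<Sum>v\<in>?V. w v * (\<gamma> v / gs v - 1))"
        proof (rule sum.cong[OF refl])
          fix v assume "v \<in> ?V"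
          have "(\<Sum>k\<in>{k\<in>K. beam k = v}. x k - 1) = (\<Sum>k\<in>{k\<in>K. beam k = v}. \<gamma> v / gs v - 1)"
            unfolding x_def by (intro sum.cong) auto
          then show "(\<Sum>k\<in>{k\<in>K. beam k = v}. x k - 1) = w v * (\<gamma> v / gs v - 1)"
            using card_eq[of v] by simp
        qed
        also have "\<dots> = (\<Sum>v\<in>?V. \<gamma> v * (Ssum E w v / pii E w v)) - (\<Sum>v\<in>?V. w v)"
        proof -
          have "w v * (\<gamma> v / gs v - 1) = \<gamma> v * (Ssum E w v / pii E w v) - w v" if v: "v \<in> ?V" for v
          proof -
            have gsv: "gs v = w v / Ssum E w v * pii E w v" using v unfolding gs_eq kap_def by simp
            have wv: "w v > 0" using wpos v by blast
            show ?thesis unfolding gsv using wv S_pos[OF tree wpos v] pii_pos[OF tree wpos, of v]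
              by (simp add: field_simps)
          qed
          then show ?thesis by (simp add: sum_subtractf)
        qed
        also have "\<dots> \<le> 0"
        proof -
          obtain c where c: "\<forall>z\<in>Zset N E. 0 \<le> c z" "sum c (Zset N E) = 1"
            "\<gamma> = (\<lambda>v. \<Sum>z\<in>Zset N E. c z * z v)"
            using g unfolding conv_fin_def by blast
          have root: "(1::nat) \<in> ?V" using tree unfolding rooted_tree_def vset_def by auto
          have VR: "insert 1 (desc E 1) = ?V" using V_root[OF tree] by simp
          have bd: "(\<Sum>v\<in>?V. z v * Ssum E w v / pii E w v) \<le> (\<Sum>v\<in>?V. w v)" if z: "z \<in> Zset N E" for z
          proof -
            have "(\<Sum>v\<in>?V. z v * Ssum E w v / pii E w v) \<le> Ssum E w 1 / pii E w 1"
              using antichain_bound[OF tree wpos z root] VR by simp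
            also have "\<dots> = (\<Sum>v\<in>?V. w v)"
              unfolding pii_def Ssum_def using anc_root[OF tree] VR by simp
            finally show ?thesis .
          qed
          have "(\<Sum>v\<in>?V. \<gamma> v * (Ssum E w v / pii E w v))
              = (\<Sum>z\<in>Zset N E. c z * (\<Sum>v\<in>?V. z v * Ssum E w v / pii E w v))"
          proof -
            have "(\<Sum>v\<in>?V. \<gamma> v * (Ssum E w v / pii E w v))
                = (\<Sum>v\<in>?V. \<Sum>z\<in>Zset N E. c z * (z v * Ssum E w v / pii E w v))"
              unfolding c(3) by (simp add: sum_distrib_right sum_divide_distrib mult.assoc)
            also have "\<dots> = (\<Sum>z\<in>Zset N E. \<Sum>v\<in>?V. c z * (z v * Ssum E w v / pii E w v))"
              by (rule sum.swap)
            also have "\<dots> = (\<Sum>z\<in>Zset N E. c z * (\<Sum>v\<in>?V. z v * Ssum E w v / pii E w v))"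
              by (simp add: sum_distrib_left)
            finally show ?thesis .
          qed
          also have "\<dots> \<le> (\<Sum>z\<in>Zset N E. c z * (\<Sum>v\<in>?V. w v))"
          proof (rule sum_mono)
            fix z assume z: "z \<in> Zset N E"
            show "c z * (\<Sum>v\<in>?V. z v * Ssum E w v / pii E w v) \<le> c z * (\<Sum>v\<in>?V. w v)"
              using bd[OF z] c(1) z by (intro mult_left_mono) auto
          qed
          also have "\<dots> = (\<Sum>v\<in>?V. w v)" using c(2) by (simp add: sum_distrib_right[symmetric])
          finally show ?thesis by simp
        qed
        finally show ?thesis .
      qed
      have sumy: "(\<Sum>k\<in>K. y k - 1) = 0"
      proof -
        have "(\<Sum>k\<in>K. y k - 1) = (\<Sum>v\<in>?V. \<Sum>k\<in>{k\<in>K. beam k = v}. y k - 1)"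
          by (rule group_beam[OF finK beamV fV])
        also have "\<dots> = (\<Sum>v\<in>?V. 0)"
        proof (rule sum.cong[OF refl])
          fix v assume v: "v \<in> ?V"
          have "(\<Sum>k\<in>{k\<in>K. beam k = v}. y k - 1) = (\<Sum>k\<in>{k\<in>K. beam k = v}. \<delta> k * w v - 1)"
            unfolding y_def using ds_k by (intro sum.cong) auto
          also have "\<dots> = w v * (\<Sum>k\<in>{k\<in>K. beam k = v}. \<delta> k) - w v"
            using card_eq[of v] by (simp add: sum_subtractf sum_distrib_left mult.commute)
          also have "\<dots> = 0" using d v unfolding Delta_def by simp
          finally show "(\<Sum>k\<in>{k\<in>K. beam k = v}. y k - 1) = 0" .
        qed
        finally show ?thesis by simp
      qed
      have "(\<Sum>k\<in>K. ln (r k * gs (beam k) * ds k) + (x k - 1) + (y k - 1))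
          = (\<Sum>k\<in>K. ln (r k * gs (beam k) * ds k)) + (\<Sum>k\<in>K. x k - 1) + (\<Sum>k\<in>K. y k - 1)"
        by (simp only: sum.distrib)
      then have "(\<Sum>k\<in>K. ln (r k * \<gamma> (beam k) * \<delta> k)) < (\<Sum>k\<in>K. ln (r k * gs (beam k) * ds k))"
        using strict sumx sumy by linarith
      then show ?thesis unfolding obj objs by simp
    qed
  qed
  show ?thesis using part1 part2 part3 unfolding gs_def ds_def by blast
qed

end
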